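(* Suppose that for each topological space $X$ a family $\mathbb{A}_X\subseteq\mathcal{P}(X)$ is given such that (a) $\mathbb{A}_X$ is an ideal; (b) if $Z\subseteq X$ then $\mathbb{A}_Z\subseteq\mathbb{A}_X$; (c) if $U\subseteq X$ is open then $\mathbb{A}_U=\{A\cap U:A\in\mathbb{A}_X\}$. If $X=Y\cup Z$ where the subspaces $Y$ and $Z$ are both $\mathbb{A}$-separable, then $X$ is $\mathbb{A}$-separable.
   Context: Given such an assignment $X\mapsto\mathbb{A}_X$, a space $X$ is $\mathbb{A}$-separable if for every sequence $\{D_n:n<\omega\}$ of dense subsets of $X$ there are sets $A_n\in\mathcal{P}(D_n)\cap\mathbb{A}_X$ ($n<\omega$) such that $\bigcup_{n<\omega}A_n$ is dense in $X$. *)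

theory Defs
  imports "HOL-Analysis.Analysis"
begin

definition is_ideal_on :: "'a topology \<Rightarrow> 'a set set \<Rightarrow> bool" where
  "is_ideal_on X I \<longleftrightarrow>
     I \<subseteq> Pow (topspace X) \<and> {} \<in> I \<and>
     (\<forall>A\<in>I. \<forall>B. B \<subseteq> A \<longrightarrow> B \<in> I) \<and>
     (\<forall>A\<in>I. \<forall>B\<in>I. A \<union> B \<in> I)"

definition dense_in :: "'a topology \<Rightarrow> 'a set \<Rightarrow> bool" where
  "dense_in X D \<longleftrightarrow> D \<subseteq> topspace X \<and> X closure_of D = topspace X"

definition A_separable :: "('a topology \<Rightarrow> 'a set set) \<Rightarrow> 'a topology \<Rightarrow> bool" where
  "A_separable \<AA> X \<longleftrightarrow>
     (\<forall>D :: nat \<Rightarrow> 'a set. (\<forall>n. dense_in X (D n)) \<longrightarrow>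
        (\<exists>A :: nat \<Rightarrow> 'a set. (\<forall>n. A n \<subseteq> D n \<and> A n \<in> \<AA> X) \<and>
            dense_in X (\<Union>n. A n)))"

end

theory Submission
  imports Defs
begin

lemma ideal_fin_union:
  assumes "is_ideal_on X I" "finite F" "\<forall>i\<in>F. f i \<in> I"
  shows "(\<Union>i\<in>F. f i) \<in> I"
  using assms(2,3)
proof (induction F rule: finite_induct)
  case empty then show ?case using assms(1) by (simp add: is_ideal_on_def)
next
  case (insert x F) then show ?case using assms(1) by (simp add: is_ideal_on_def)
qed

lemma side_dense:
  assumes "W \<subseteq> topspace X" "T \<subseteq> topspace X"
  shows "dense_in (subtopology X W) ((W\<inter>T) \<union> (W - X closure_of (W\<inter>T)))"
proof -
  let ?E = "(W\<inter>T) \<union> (W - X closure_of (W\<inter>T))"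
  have E: "?E \<subseteq> W" by blast
  have "W \<subseteq> X closure_of ?E"
  proof
    fix y assume y: "y \<in> W"
    show "y \<in> X closure_of ?E"
    proof (cases "y \<in> X closure_of (W\<inter>T)")
      case True then show ?thesis using closure_of_mono[of "W\<inter>T" ?E X] by blast
    next
      case False then have "y \<in> ?E" using y by blast
      then show ?thesis using closure_of_subset[of ?E X] E assms(1) by blast
    qed
  qed
  then show ?thesis using E assms(1)
    unfolding dense_in_def closure_of_subtopology_open[of X W ?E, OF disjI2[OF E]]
    by (auto simp: topspace_subtopology)
qed

lemma side_hit:
  fixes j :: nat and T :: "nat \<Rightarrow> 'a set" and B :: "nat \<Rightarrow> 'a set"
  assumes W: "W \<subseteq> topspace X"
    and d: "dense_in (subtopology X W) (\<Union>n. B n)"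
    and B: "\<forall>n. B n \<subseteq> (W \<inter> T (max n j)) \<union> (W - X closure_of (W \<inter> T (max n j)))"
    and V: "openin X V" "V \<noteq> {}"
    and cov: "\<forall>p\<ge>j. V \<subseteq> X closure_of (W \<inter> T p)"
  shows "\<exists>n. \<exists>y\<in>V. y \<in> B n \<and> y \<in> T (max n j)"
proof -
  have "V \<subseteq> X closure_of (W \<inter> T j)" by (rule cov[rule_format]) simp
  then have "V \<inter> X closure_of (W \<inter> T j) \<noteq> {}" using V(2) by blast
  then have "V \<inter> (W \<inter> T j) \<noteq> {}" using openin_Int_closure_of_eq_empty[OF V(1)] by blast
  then obtain w where w: "w \<in> V" "w \<in> W" by blast
  have "subtopology X W closure_of (\<Union>n. B n) = W"
    using d W unfolding dense_in_def by (auto simp: topspace_subtopology)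
  then have "W \<subseteq> X closure_of (W \<inter> (\<Union>n. B n))" unfolding closure_of_subtopology by blast
  also have "\<dots> \<subseteq> X closure_of (\<Union>n. B n)" by (rule closure_of_mono) blast
  finally have "w \<in> X closure_of (\<Union>n. B n)" using w by blast
  then have "\<forall>T. w \<in> T \<and> openin X T \<longrightarrow> (\<exists>y. y \<in> (\<Union>n. B n) \<and> y \<in> T)"
    unfolding in_closure_of by (rule conjunct2)
  then obtain y where y: "y \<in> (\<Union>n. B n)" "y \<in> V" using V(1) w(1) by meson
  then obtain n where yn: "y \<in> B n" by blast
  have "V \<subseteq> X closure_of (W \<inter> T (max n j))" by (rule cov[rule_format]) simp
  then have "y \<in> X closure_of (W \<inter> T (max n j))" using y(2) by blast
  moreover have "y \<in> (W \<inter> T (max n j)) \<union> (W - X closure_of (W \<inter> T (max n j)))"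
    using B yn by blast
  ultimately have "y \<in> T (max n j)" by blast
  then show ?thesis using yn y(2) by blast
qed

theorem theorem3p13:
  fixes \<AA> :: "'a topology \<Rightarrow> 'a set set"
    and X :: "'a topology" and Y Z :: "'a set"
  assumes ideal: "\<And>T. is_ideal_on T (\<AA> T)"
    and mono_sub: "\<And>T S. S \<subseteq> topspace T \<Longrightarrow> \<AA> (subtopology T S) \<subseteq> \<AA> T"
    and open_sub: "\<And>T U. openin T U \<Longrightarrow> \<AA> (subtopology T U) = (\<lambda>A. A \<inter> U) ` \<AA> T"
    and XYZ: "topspace X = Y \<union> Z"
    and sepY: "A_separable \<AA> (subtopology X Y)"
    and sepZ: "A_separable \<AA> (subtopology X Z)"
  shows "A_separable \<AA> X"
  unfolding A_separable_def
proof (intro allI impI)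
  fix D :: "nat \<Rightarrow> 'a set"
  assume D: "\<forall>n. dense_in X (D n)"
  define T where "T n = (\<Union>m\<in>{n..}. D m)" for n
  have Dtop: "D m \<subseteq> topspace X" for m using D by (simp add: dense_in_def)
  have Ttop: "T n \<subseteq> topspace X" for n using Dtop unfolding T_def by blast
  have Tanti: "T p \<subseteq> T j" if "j \<le> p" for j p using that unfolding T_def by (intro UN_mono) auto
  have Tdense: "X closure_of T n = topspace X" for n
  proof -
    have "X closure_of D n \<subseteq> X closure_of T n" by (rule closure_of_mono) (auto simp: T_def)
    moreover have "X closure_of D n = topspace X" using D by (simp add: dense_in_def)
    ultimately show ?thesis using closure_of_subset_topspace[of X "T n"] by blast
  qed
  have YX: "Y \<subseteq> topspace X" and ZX: "Z \<subseteq> topspace X" using XYZ by auto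
  define EY where "EY p = (Y \<inter> T p) \<union> (Y - X closure_of (Y \<inter> T p))" for p
  define EZ where "EZ p = (Z \<inter> T p) \<union> (Z - X closure_of (Z \<inter> T p))" for p
  have "\<exists>A. (\<forall>n. A n \<subseteq> EY (max n j) \<and> A n \<in> \<AA> (subtopology X Y)) \<and>
          dense_in (subtopology X Y) (\<Union>n. A n)" for j
  proof -
    have "\<forall>n. dense_in (subtopology X Y) (EY (max n j))"
      unfolding EY_def using side_dense[OF YX Ttop] by blast
    then show ?thesis using sepY[unfolded A_separable_def, rule_format, of "\<lambda>n. EY (max n j)"] by blast
  qed
  then have "\<forall>j. \<exists>A. (\<forall>n. A n \<subseteq> EY (max n j) \<and> A n \<in> \<AA> (subtopology X Y)) \<and>
          dense_in (subtopology X Y) (\<Union>n. A n)" by blast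
  then obtain AY where AY: "\<And>j. (\<forall>n. AY j n \<subseteq> EY (max n j) \<and> AY j n \<in> \<AA> (subtopology X Y)) \<and>
          dense_in (subtopology X Y) (\<Union>n. AY j n)" by (subst (asm) choice_iff) blast
  have "\<exists>A. (\<forall>n. A n \<subseteq> EZ (max n j) \<and> A n \<in> \<AA> (subtopology X Z)) \<and>
          dense_in (subtopology X Z) (\<Union>n. A n)" for j
  proof -
    have "\<forall>n. dense_in (subtopology X Z) (EZ (max n j))"
      unfolding EZ_def using side_dense[OF ZX Ttop] by blast
    then show ?thesis using sepZ[unfolded A_separable_def, rule_format, of "\<lambda>n. EZ (max n j)"] by blast
  qed
  then have "\<forall>j. \<exists>A. (\<forall>n. A n \<subseteq> EZ (max n j) \<and> A n \<in> \<AA> (subtopology X Z)) \<and>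
          dense_in (subtopology X Z) (\<Union>n. A n)" by blast
  then obtain AZ where AZ: "\<And>j. (\<forall>n. AZ j n \<subseteq> EZ (max n j) \<and> AZ j n \<in> \<AA> (subtopology X Z)) \<and>
          dense_in (subtopology X Z) (\<Union>n. AZ j n)" by (subst (asm) choice_iff) blast
  define A where "A m = (\<Union>q\<in>{..m}\<times>{..m}. (AY (fst q) (snd q) \<union> AZ (fst q) (snd q)) \<inter> D m)" for m
  have Asub: "A m \<subseteq> D m" for m unfolding A_def by blast
  have Ain: "A m \<in> \<AA> X" for m
    unfolding A_def
  proof (rule ideal_fin_union[OF ideal], simp, intro ballI)
    fix q assume "q \<in> {..m}\<times>{..m}"
    have "AY (fst q) (snd q) \<in> \<AA> X" using conjunct1[OF AY[of "fst q"]] mono_sub[OF YX] by blast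
    moreover have "AZ (fst q) (snd q) \<in> \<AA> X" using conjunct1[OF AZ[of "fst q"]] mono_sub[OF ZX] by blast
    ultimately have "AY (fst q) (snd q) \<union> AZ (fst q) (snd q) \<in> \<AA> X"
      using ideal[of X] unfolding is_ideal_on_def by blast
    then show "(AY (fst q) (snd q) \<union> AZ (fst q) (snd q)) \<inter> D m \<in> \<AA> X"
      using ideal[of X] unfolding is_ideal_on_def by blast
  qed
  have hitA: "y \<in> (\<Union>m. A m)" if h1: "y \<in> AY j n \<or> y \<in> AZ j n" and h2: "y \<in> T (max n j)" for y j n
  proof -
    obtain m where m: "m \<ge> max n j" "y \<in> D m" using h2 unfolding T_def by auto
    then have "(j, n) \<in> {..m}\<times>{..m}" by auto
    moreover have "y \<in> (AY (fst (j,n)) (snd (j,n)) \<union> AZ (fst (j,n)) (snd (j,n))) \<inter> D m"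
      using h1 m(2) by simp
    ultimately have "y \<in> A m" unfolding A_def by (rule UN_I)
    then show ?thesis by blast
  qed
  have cover: "topspace X = X closure_of (Y \<inter> T p) \<union> X closure_of (Z \<inter> T p)" for p
  proof -
    have "T p = (Y \<inter> T p) \<union> (Z \<inter> T p)" using Ttop XYZ by blast
    then have "X closure_of T p = X closure_of (Y \<inter> T p) \<union> X closure_of (Z \<inter> T p)" by (metis closure_of_Un)
    then show ?thesis using Tdense[of p] by simp
  qed
  have meet: "\<exists>y\<in>U. y \<in> (\<Union>m. A m)" if U: "openin X U" "U \<noteq> {}" for U
  proof (cases "\<exists>j. U - X closure_of (Y \<inter> T j) \<noteq> {}")
    case True
    then obtain j where j: "U - X closure_of (Y \<inter> T j) \<noteq> {}" by blast
    let ?V = "U - X closure_of (Y \<inter> T j)"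
    have Vo: "openin X ?V" using U(1) by (intro openin_diff) auto
    have covZ: "\<forall>p\<ge>j. ?V \<subseteq> X closure_of (Z \<inter> T p)"
    proof (intro allI impI)
      fix p assume "j \<le> p"
      then have "X closure_of (Y \<inter> T p) \<subseteq> X closure_of (Y \<inter> T j)"
        using Tanti by (intro closure_of_mono) blast
      moreover have "?V \<subseteq> topspace X" using openin_subset[OF Vo] .
      ultimately show "?V \<subseteq> X closure_of (Z \<inter> T p)" using cover[of p] by blast
    qed
    have BZ: "\<forall>n. AZ j n \<subseteq> (Z \<inter> T (max n j)) \<union> (Z - X closure_of (Z \<inter> T (max n j)))"
      using AZ unfolding EZ_def by blast
    obtain n y where y: "y \<in> ?V" "y \<in> AZ j n" "y \<in> T (max n j)"
      using side_hit[OF ZX conjunct2[OF AZ[of j]] BZ Vo j covZ] by blast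
    have "y \<in> (\<Union>m. A m)" using hitA[of y j n] y(2,3) by blast
    then show ?thesis using y(1) by blast
  next
    case False
    then have covY: "\<forall>p\<ge>0. U \<subseteq> X closure_of (Y \<inter> T p)" by simp
    have BY: "\<forall>n. AY 0 n \<subseteq> (Y \<inter> T (max n 0)) \<union> (Y - X closure_of (Y \<inter> T (max n 0)))"
      using AY unfolding EY_def by blast
    obtain n y where y: "y \<in> U" "y \<in> AY 0 n" "y \<in> T (max n 0)"
      using side_hit[OF YX conjunct2[OF AY[of 0]] BY U covY] by blast
    have "y \<in> (\<Union>m. A m)" using hitA[of y 0 n] y(2,3) by blast
    then show ?thesis using y(1) by blast
  qed
  have "X closure_of (\<Union>m. A m) = topspace X"
  proof
    show "X closure_of (\<Union>m. A m) \<subseteq> topspace X" by (rule closure_of_subset_topspace)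
    show "topspace X \<subseteq> X closure_of (\<Union>m. A m)"
    proof
      fix x assume x: "x \<in> topspace X"
      show "x \<in> X closure_of (\<Union>m. A m)" unfolding in_closure_of
        using x meet by blast
    qed
  qed
  then show "\<exists>A. (\<forall>n. A n \<subseteq> D n \<and> A n \<in> \<AA> X) \<and> dense_in X (\<Union>n. A n)"
    using Asub Ain Dtop unfolding dense_in_def by (intro exI[of _ A]) blast
qed

end
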